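(* Let $\Omega$ be an infinite locally compact metric space, $T:\Omega\to\Omega$ continuous, and $\nu$ a nonzero Radon measure on $(\Omega,\mathcal{B}(\Omega))$. If the dynamical system $(\Omega,T)$ is chaotic with respect to $\nu$, then it is topologically transitive.
   Context: $(\Omega,T)$ is chaotic with respect to $\nu$ if for $\nu$-almost every $x_0\in\Omega$ and every nonempty open $U\subset\Omega$ there is $n\in\mathbb{N}$ with $T^n(x_0)\in U$. $(\Omega,T)$ is topologically transitive if for all nonempty open sets $U,V\subset\Omega$ there exists $n\ge0$ with $T^{-n}(U)\cap V\neq\emptyset$. *)

theory Defs
  imports "HOL-Analysis.Analysis"
begin

definition radon_measure :: "'a::metric_space measure \<Rightarrow> bool" where
  "radon_measure M \<longleftrightarrow>
     sets M = sets borel \<and>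
     (\<forall>K. compact K \<longrightarrow> emeasure M K < \<infinity>) \<and>
     (\<forall>A\<in>sets M. emeasure M A = (INF U\<in>{U. open U \<and> A \<subseteq> U}. emeasure M U)) \<and>
     (\<forall>U. open U \<longrightarrow> emeasure M U = (SUP K\<in>{K. compact K \<and> K \<subseteq> U}. emeasure M K))"

definition chaotic_wrt :: "'a::topological_space measure \<Rightarrow> ('a \<Rightarrow> 'a) \<Rightarrow> bool" where
  "chaotic_wrt \<nu> T \<longleftrightarrow>
     (AE x in \<nu>. \<forall>U. open U \<and> U \<noteq> {} \<longrightarrow> (\<exists>n\<ge>1. (T ^^ n) x \<in> U))"

definition topologically_transitive :: "('a::topological_space \<Rightarrow> 'a) \<Rightarrow> bool" where
  "topologically_transitive T \<longleftrightarrow>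
     (\<forall>U V. open U \<and> U \<noteq> {} \<and> open V \<and> V \<noteq> {} \<longrightarrow>
        (\<exists>n::nat. (T ^^ n) -` U \<inter> V \<noteq> {}))"

end

theory Submission
  imports Defs
begin

lemma funpow_add_apply: "(T ^^ (a + b)) x = (T ^^ a) ((T ^^ b) x)"
  by (simp add: funpow_add)

lemma orbit_late:
  fixes T :: "'a::metric_space \<Rightarrow> 'a"
  assumes inf: "infinite (UNIV :: 'a set)"
    and cont: "continuous_on UNIV T"
    and dense: "\<forall>U. open U \<and> U \<noteq> {} \<longrightarrow> (\<exists>n\<ge>1. (T ^^ n) x \<in> U)"
    and U: "open U" "U \<noteq> {}"
  shows "\<exists>n>m. (T ^^ n) x \<in> U"
proof -
  have nonisol: "infinite W" if W: "open W" "x \<in> W" for W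
  proof
    assume fW: "finite W"
    have "open (W - (W - {x}))" using W fW by (intro open_Diff) (auto intro: finite_imp_closed)
    moreover have "W - (W - {x}) = {x}" using W by auto
    ultimately have ox: "open {x}" by simp
    then obtain q where q: "q \<ge> 1" "(T ^^ q) x = x" using dense by blast
    define Orb where "Orb = (\<lambda>i. (T ^^ i) x) ` {1..q}"
    have fOrb: "finite Orb" unfolding Orb_def by simp
    have per: "(T ^^ n) x \<in> Orb" if "n \<ge> 1" for n
      using that
    proof (induction n rule: less_induct)
      case (less n)
      show ?case
      proof (cases "n \<le> q")
        case True then show ?thesis using less.prems unfolding Orb_def by auto
      next
        case False
        then have "n = (n - q) + q" by simp
        then have "(T ^^ n) x = (T ^^ (n - q)) x" using q(2)
          by (metis funpow_add_apply)
        moreover have "(T ^^ (n - q)) x \<in> Orb" using False q(1) by (intro less.IH) auto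
        ultimately show ?thesis by simp
      qed
    qed
    have "UNIV \<subseteq> Orb"
    proof (rule ccontr)
      assume "\<not> UNIV \<subseteq> Orb"
      then have "open (- Orb)" "- Orb \<noteq> {}" using fOrb finite_imp_closed by auto
      then obtain n where "n \<ge> 1" "(T ^^ n) x \<in> - Orb" using dense by blast
      then show False using per by auto
    qed
    then show False using fOrb inf finite_subset by blast
  qed
  obtain j where j: "j \<ge> 1" "(T ^^ j) x \<in> U" using dense U by blast
  have contj: "continuous_on UNIV (T ^^ j)"
  proof (induction j)
    case 0 then show ?case by (simp add: continuous_on_id)
  next
    case (Suc j)
    have "continuous_on UNIV (T \<circ> (T ^^ j))"
      by (rule continuous_on_compose[OF Suc]) (use cont continuous_on_subset in blast)
    then show ?case by (simp add: funpow_Suc_right[symmetric] funpow_swap1 comp_def)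
  qed
  define W where "W = (T ^^ j) -` U"
  have oW: "open W" unfolding W_def using contj U(1)
    by (metis open_vimage)
  have xW: "x \<in> W" unfolding W_def using j by simp
  define F where "F = (\<lambda>i. (T ^^ i) x) ` {1..m}"
  have fF: "finite F" unfolding F_def by simp
  have "open (W - F)" using oW fF by (intro open_Diff) (auto intro: finite_imp_closed)
  moreover have "W - F \<noteq> {}"
  proof
    assume "W - F = {}"
    then have "W \<subseteq> F" by blast
    then show False using nonisol[OF oW xW] fF finite_subset by blast
  qed
  ultimately obtain k where k: "k \<ge> 1" "(T ^^ k) x \<in> W - F" using dense by blast
  have "k > m"
  proof (rule ccontr)
    assume "\<not> k > m"
    then have "(T ^^ k) x \<in> F" using k(1) unfolding F_def by auto
    then show False using k(2) by blast
  qed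
  moreover have "(T ^^ (j + k)) x \<in> U" using k(2) unfolding W_def
    by (simp add: funpow_add_apply)
  ultimately show ?thesis by (intro exI[of _ "j + k"]) auto
qed

theorem mainTheorem4:
  fixes T :: "'a::metric_space \<Rightarrow> 'a" and \<nu> :: "'a measure"
  assumes "infinite (UNIV :: 'a set)"
    and "locally compact (UNIV :: 'a set)"
    and "continuous_on UNIV T"
    and "radon_measure \<nu>"
    and "emeasure \<nu> (space \<nu>) \<noteq> 0"
    and "chaotic_wrt \<nu> T"
  shows "topologically_transitive T"
proof -
  let ?P = "\<lambda>x. \<forall>U. open U \<and> U \<noteq> {} \<longrightarrow> (\<exists>n\<ge>1. (T ^^ n) x \<in> U)"
  have ae: "AE x in \<nu>. ?P x" using assms(6) unfolding chaotic_wrt_def .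
  obtain x where x: "?P x"
  proof (rule ccontr)
    assume "\<not> thesis"
    then have np: "\<And>x. \<not> ?P x" using that by blast
    from ae obtain N where N: "{x \<in> space \<nu>. \<not> ?P x} \<subseteq> N" "emeasure \<nu> N = 0" "N \<in> sets \<nu>"
      by (rule AE_E)
    have "space \<nu> \<subseteq> N" using N(1) np by blast
    then have "emeasure \<nu> (space \<nu>) \<le> emeasure \<nu> N" using N(3) by (intro emeasure_mono) auto
    then show False using N(2) assms(5) by simp
  qed
  show ?thesis unfolding topologically_transitive_def
  proof (intro allI impI)
    fix U V :: "'a set"
    assume h: "open U \<and> U \<noteq> {} \<and> open V \<and> V \<noteq> {}"
    obtain m where m: "m \<ge> 1" "(T ^^ m) x \<in> V" using x h by blast
    obtain n where n: "n > m" "(T ^^ n) x \<in> U"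
      using orbit_late[OF assms(1) assms(3) x, of U m] h by blast
    have "(T ^^ (n - m)) ((T ^^ m) x) = (T ^^ n) x"
      using n(1) by (metis funpow_add_apply le_add_diff_inverse2 less_imp_le)
    then have "(T ^^ m) x \<in> (T ^^ (n - m)) -` U \<inter> V" using n m by simp
    then show "\<exists>n. (T ^^ n) -` U \<inter> V \<noteq> {}" by blast
  qed
qed

end
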